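(* For every long virtual knot diagram $K$ with $m>0$ singular crossings (chords), there exist a regular twist lattice $\Phi_K:\mathbb{Z}^m\to\mathscr{K}$, $\alpha\in(\mathbb{Z}_{\ge 0})^m$ and $\nu\in\{+,-\}^m$ such that $\partial^{\nu\alpha}\Phi_K(\vec 0)=K$ as elements of $\mathbb{Z}[\mathscr{K}]$.
   Context: Long virtual knots: a long virtual knot diagram is a generic immersion $\mathbb{R}\to\mathbb{R}^2$, standard outside a compact set, oriented along the positive $x$-direction, with double points marked classical (over/under), virtual, or singular; $\mathscr{K}$ is the set of equivalence classes of diagrams without singular crossings. A diagram with singular crossings is regarded as an element of $\mathbb{Z}[\mathscr{K}]$ via $K_\times=K_+-K_-$ at each singular crossing. Gauss diagram: $\mathbb{R}$ with, for each classical crossing with preimages $x<y$, an arrow between $x$ and $y$ pointing right if the overcrossing is at $x$, left otherwise, labelled by its writhe sign; singular crossings are drawn as (signed) chords. Discrete derivatives: for $\Phi:\mathbb{Z}^m\to\mathbb{Z}[\mathscr{K}]$, $(\partial_i^+\Phi)(z)=\Phi(z+e_i)-\Phi(z)$, $(\partial_i^-\Phi)(z)=\Phi(z)-\Phi(z-e_i)$; for $a\ge0$, $\partial_i^{a}$ and $\partial_i^{-a}$ are the $a$-fold iterates of $\partial_i^+$ and $\partial_i^-$ (with $\partial_i^0=\mathrm{id}$); for $\alpha\in(\mathbb{Z}_{\ge0})^m$, $\nu\in\{+,-\}^m$, $\partial^{\nu\alpha}=\partial_1^{\nu_1\alpha_1}\cdots\partial_m^{\nu_m\alpha_m}$. Regular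 twist lattices: a proper pair is a pair of disjoint open intervals $A<A'$ of $\mathbb{R}$ such that every arrow or chord with an endpoint in $A\cup A'$ has one endpoint in each. Given $Y\in\{S,B\}$, $Z\in\{L,R\}$, a $p$-configuration in $(A,A')$ consists of $p$ arrows with endpoints $a_1<\dots<a_p$ in $A$, $b_1<\dots<b_p$ in $A'$, arrow $i$ joining $a_i$ to $b_i$ ($Y=S$) or $b_{p+1-i}$ ($Y=B$). A regular twist sequence of type $OYZ$ (resp. $EYZ$) with pair $(A,A')$ assigns to $k\in\mathbb{Z}$ a $p$-configuration with $p=|2k-1|$ (resp. $|2k|$), all arrows signed $+$ if $k\ge1$ and $-$ if $k\le0$, directions alternating with arrow $1$ pointing in direction $Z$ if $k\ge 1$ and opposite to $Z$ if $k\le0$. A regular twist lattice of dimension $m$ is $\Phi:\mathbb{Z}^m\to\mathscr{K}$ given by a fixed diagram $G$ and disjoint proper pairs $(A_i,A_i')$, $1\le i\le m$, free of endpoints of $G$, with $\Phi(k_1,\dots,k_m)$ equal to $G$ plus, in each $(A_i,A_i')$, the $k_i$-th configuration of a regular twist sequence of some type $OYZ$ or $EYZ$. *)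

theory Defs
  imports "HOL-Analysis.Analysis" "HOL-Library.Poly_Mapping"
begin

text \<open>A crossing of a Gauss diagram on the line is a triple (x, y, k) with x < y the
two preimages.  For a classical crossing k = Arrow r s, where r = True iff the arrow
points right (i.e. the overcrossing is at x) and s = True iff the writhe sign is +.
A singular crossing is k = Chord d, where d is the direction (True = right) of the
arrow of its positive resolution; its negative resolution is the arrow of the
opposite direction with sign -.\<close>

datatype kind = Arrow bool bool | Chord bool

type_synonym crossing = "real \<times> real \<times> kind"
type_synonym diagram = "crossing set"

definition ends :: "diagram \<Rightarrow> real set" where
  "ends G = (\<Union>c\<in>G. {fst c, fst (snd c)})"

definition wf_diagram :: "diagram \<Rightarrow> bool" where
  "wf_diagram G \<longleftrightarrow> finite G \<and> (\<forall>c\<in>G. fst c < fst (snd c)) \<and>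
     (\<forall>c\<in>G. \<forall>c'\<in>G. c \<noteq> c' \<longrightarrow> {fst c, fst (snd c)} \<inter> {fst c', fst (snd c')} = {})"

fun is_chord :: "kind \<Rightarrow> bool" where
  "is_chord (Chord _) = True"
| "is_chord (Arrow _ _) = False"

definition chords :: "diagram \<Rightarrow> diagram" where
  "chords G = {c\<in>G. is_chord (snd (snd c))}"

definition classical :: "diagram \<Rightarrow> bool" where
  "classical G \<longleftrightarrow> chords G = {}"

definition isotopic :: "diagram \<Rightarrow> diagram \<Rightarrow> bool" where
  "isotopic G H \<longleftrightarrow> (\<exists>f::real \<Rightarrow> real. strict_mono f \<and> surj f \<and>
      H = (\<lambda>(x, y, k). (f x, f y, k)) ` G)"

definition omega1 :: "diagram \<Rightarrow> diagram \<Rightarrow> bool" where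
  "omega1 G H \<longleftrightarrow> (\<exists>x y r s. x < y \<and> ends G \<inter> {x..y} = {} \<and>
      H = insert (x, y, Arrow r s) G)"

definition omega2 :: "diagram \<Rightarrow> diagram \<Rightarrow> bool" where
  "omega2 G H \<longleftrightarrow> (\<exists>a1 a2 b1 b2 r s. a1 < a2 \<and> a2 < min b1 b2 \<and> b1 \<noteq> b2 \<and>
      ends G \<inter> {a1..a2} = {} \<and> ends G \<inter> {min b1 b2..max b1 b2} = {} \<and>
      H = G \<union> {(a1, b1, Arrow r s), (a2, b2, Arrow r (\<not> s))})"

text \<open>Omega 3.  Three strands pass through the intervals [u1,v1] < [u2,v2] < [u3,v3]
(strands 0, 1, 2).  The arrows join strands 01, 02, 12, with directions r01, r02, r12
(True = pointing right) and signs e01, e02, e12.  The order bits say: o0 -- in the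
first interval the endpoint of arrow 01 comes first; o1 -- in the second interval the
endpoint of arrow 01 comes first; o2 -- in the third interval the endpoint of arrow 02
comes first.  The side
conditions (acyclicity of directions = existence of top/middle/bottom strand, and the
sign relations) characterise exactly the configurations realised by three oriented
straight strands in the plane.\<close>

definition tri :: "real \<Rightarrow> real \<Rightarrow> real \<Rightarrow> real \<Rightarrow> real \<Rightarrow> real \<Rightarrow> bool \<Rightarrow> bool \<Rightarrow> bool \<Rightarrow>
    bool \<Rightarrow> bool \<Rightarrow> bool \<Rightarrow> bool \<Rightarrow> bool \<Rightarrow> bool \<Rightarrow> diagram" where
  "tri u1 v1 u2 v2 u3 v3 o0 o1 o2 r01 r02 r12 e01 e02 e12 =
     {(if o0 then u1 else v1, if o1 then u2 else v2, Arrow r01 e01),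
      (if o0 then v1 else u1, if o2 then u3 else v3, Arrow r02 e02),
      (if o1 then v2 else u2, if o2 then v3 else u3, Arrow r12 e12)}"

definition omega3 :: "diagram \<Rightarrow> diagram \<Rightarrow> bool" where
  "omega3 G1 G2 \<longleftrightarrow> (\<exists>G u1 v1 u2 v2 u3 v3 o0 o1 o2 r01 r02 r12 e01 e02 e12.
      u1 < v1 \<and> v1 < u2 \<and> u2 < v2 \<and> v2 < u3 \<and> u3 < v3 \<and>
      ends G \<inter> ({u1..v1} \<union> {u2..v2} \<union> {u3..v3}) = {} \<and>
      \<not> (r01 = r12 \<and> r02 \<noteq> r01) \<and>
      (e01 \<noteq> e02) = ((o1 \<noteq> o2) \<noteq> (r01 \<noteq> r02)) \<and>
      (e02 \<noteq> e12) = ((o0 \<noteq> o1) \<noteq> (r02 \<noteq> r12)) \<and>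
      G1 = G \<union> tri u1 v1 u2 v2 u3 v3 o0 o1 o2 r01 r02 r12 e01 e02 e12 \<and>
      G2 = G \<union> tri u1 v1 u2 v2 u3 v3 (\<not> o0) (\<not> o1) (\<not> o2) r01 r02 r12 e01 e02 e12)"

definition kstep :: "diagram \<Rightarrow> diagram \<Rightarrow> bool" where
  "kstep G H \<longleftrightarrow> wf_diagram G \<and> wf_diagram H \<and> classical G \<and> classical H \<and>
     (isotopic G H \<or> omega1 G H \<or> omega1 H G \<or> omega2 G H \<or> omega2 H G \<or> omega3 G H)"

definition kequiv :: "diagram \<Rightarrow> diagram \<Rightarrow> bool" where
  "kequiv = (\<lambda>G H. kstep G H \<or> kstep H G)\<^sup>*\<^sup>*"

text \<open>The long virtual knot represented by a classical diagram (an element of the set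
of knots \<open>\<K>\<close>, realised as an equivalence class of Gauss diagrams).\<close>
definition knot_class :: "diagram \<Rightarrow> diagram set" where
  "knot_class G = {H. kequiv G H}"

text \<open>\<open>\<int>[\<K>]\<close> is realised as finitely supported integer functions on classes.\<close>
type_synonym zknot = "diagram set \<Rightarrow>\<^sub>0 int"

definition knot :: "diagram \<Rightarrow> zknot" where
  "knot G = Poly_Mapping.single (knot_class G) 1"

fun res_pos :: "crossing \<Rightarrow> crossing" where
  "res_pos (x, y, Chord d) = (x, y, Arrow d True)"
| "res_pos c = c"

fun res_neg :: "crossing \<Rightarrow> crossing" where
  "res_neg (x, y, Chord d) = (x, y, Arrow (\<not> d) False)"
| "res_neg c = c"

text \<open>A diagram with singular crossings as an element of \<open>\<int>[\<K>]\<close>, via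
\<open>K\<^sub>\<times> = K\<^sub>+ - K\<^sub>-\<close> at each singular crossing.\<close>
definition resolve :: "diagram \<Rightarrow> zknot" where
  "resolve K = (\<Sum>S\<in>Pow (chords K).
      Poly_Mapping.single
        (knot_class ((K - chords K) \<union> res_pos ` S \<union> res_neg ` (chords K - S)))
        ((-1) ^ card (chords K - S)))"

section \<open>Discrete derivatives on \<open>\<int>\<^sup>m\<close> (points are functions nat => int; only
coordinates below m are relevant)\<close>

definition dplus :: "nat \<Rightarrow> ((nat \<Rightarrow> int) \<Rightarrow> 'v::ab_group_add) \<Rightarrow> (nat \<Rightarrow> int) \<Rightarrow> 'v" where
  "dplus i F = (\<lambda>z. F (z(i := z i + 1)) - F z)"

definition dminus :: "nat \<Rightarrow> ((nat \<Rightarrow> int) \<Rightarrow> 'v::ab_group_add) \<Rightarrow> (nat \<Rightarrow> int) \<Rightarrow> 'v" where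
  "dminus i F = (\<lambda>z. F z - F (z(i := z i - 1)))"

text \<open>\<open>\<partial>\<^sub>i\<^sup>\<plusminus>a\<close>: sign True means +, False means -.\<close>
definition dpow :: "nat \<Rightarrow> bool \<Rightarrow> nat \<Rightarrow> ((nat \<Rightarrow> int) \<Rightarrow> 'v::ab_group_add) \<Rightarrow> (nat \<Rightarrow> int) \<Rightarrow> 'v" where
  "dpow i s a = (if s then dplus i else dminus i) ^^ a"

definition dmulti :: "nat \<Rightarrow> (nat \<Rightarrow> bool) \<Rightarrow> (nat \<Rightarrow> nat) \<Rightarrow>
    ((nat \<Rightarrow> int) \<Rightarrow> 'v::ab_group_add) \<Rightarrow> (nat \<Rightarrow> int) \<Rightarrow> 'v" where
  "dmulti m \<nu> \<alpha> F = foldr (\<lambda>i G. dpow i (\<nu> i) (\<alpha> i) G) [0..<m] F"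

definition open_interval :: "real set \<Rightarrow> bool" where
  "open_interval A \<longleftrightarrow> open A \<and> is_interval A \<and> A \<noteq> {}"

text \<open>The k-th configuration of a regular twist sequence of type O/E (isodd = True for O),
Y (ybig = True for B, False for S), Z (zright = True for R, False for L) in (A, A').
Arrows are indexed from 0, so arrow 1 of the paper is index 0.\<close>
definition twist_config :: "bool \<Rightarrow> bool \<Rightarrow> bool \<Rightarrow> real set \<Rightarrow> real set \<Rightarrow> int \<Rightarrow> diagram \<Rightarrow> bool" where
  "twist_config isodd ybig zright A A' k C \<longleftrightarrow>
     (let p = nat (if isodd then \<bar>2 * k - 1\<bar> else \<bar>2 * k\<bar>) in
      \<exists>a b :: nat \<Rightarrow> real.
        strict_mono_on {..<p} a \<and> strict_mono_on {..<p} b \<and>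
        a ` {..<p} \<subseteq> A \<and> b ` {..<p} \<subseteq> A' \<and>
        C = (\<lambda>i. (a i, b (if ybig then p - 1 - i else i),
                   Arrow ((zright = (k \<ge> 1)) = even i) (k \<ge> 1))) ` {..<p})"

definition twist_lattice :: "nat \<Rightarrow> ((nat \<Rightarrow> int) \<Rightarrow> diagram set) \<Rightarrow> bool" where
  "twist_lattice m \<Phi> \<longleftrightarrow>
     (\<exists>G (A :: nat \<Rightarrow> real set) (A' :: nat \<Rightarrow> real set) isodd ybig zright
        (conf :: nat \<Rightarrow> int \<Rightarrow> diagram).
       wf_diagram G \<and> classical G \<and>
       (\<forall>i<m. open_interval (A i) \<and> open_interval (A' i) \<and>
              (\<forall>x\<in>A i. \<forall>y\<in>A' i. x < y) \<and> ends G \<inter> (A i \<union> A' i) = {}) \<and>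
       (\<forall>i<m. \<forall>j<m. i \<noteq> j \<longrightarrow> (A i \<union> A' i) \<inter> (A j \<union> A' j) = {}) \<and>
       (\<forall>i<m. \<forall>k. twist_config (isodd i) (ybig i) (zright i) (A i) (A' i) k (conf i k)) \<and>
       (\<forall>z. \<Phi> z = knot_class (G \<union> (\<Union>i<m. conf i (z i)))))"

end

theory Submission
  imports Defs
begin


definition sh :: "(nat \<Rightarrow> int) \<Rightarrow> nat set \<Rightarrow> nat \<Rightarrow> int" where
  "sh z S = (\<lambda>i. if i \<in> S then z i + 1 else z i)"

lemma neg_pow_diff: "(uminus ^^ n) (a - b) = (uminus ^^ n) a - (uminus ^^ n) (b::'v::ab_group_add)"
  by (induction n) (auto simp: algebra_simps)

lemma neg_pow_Suc: "(uminus ^^ Suc n) (a::'v::ab_group_add) = - (uminus ^^ n) a"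
  by simp

lemma dmulti_Suc: "dmulti (Suc m) \<nu> \<alpha> F = dmulti m \<nu> \<alpha> (dpow m (\<nu> m) (\<alpha> m) F)"
  by (simp add: dmulti_def)

lemma dmulti_ones:
  "dmulti m (\<lambda>_. True) (\<lambda>_. 1) (F :: _ \<Rightarrow> 'v::ab_group_add) z =
     (\<Sum>S\<in>Pow {..<m}. (uminus ^^ card ({..<m} - S)) (F (sh z S)))"
proof (induction m arbitrary: F)
  case 0
  then show ?case by (simp add: dmulti_def sh_def)
next
  case (Suc m)
  have fin: "finite (Pow {..<m})" by simp
  have "dmulti (Suc m) (\<lambda>_. True) (\<lambda>_. 1) F z = dmulti m (\<lambda>_. True) (\<lambda>_. 1) (dplus m F) z"
    by (simp add: dmulti_Suc dpow_def)
  also have "\<dots> = (\<Sum>S\<in>Pow {..<m}. (uminus ^^ card ({..<m} - S)) (dplus m F (sh z S)))"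
    by (rule Suc.IH)
  also have "\<dots> = (\<Sum>S\<in>Pow {..<m}. (uminus ^^ card ({..<m} - S)) (F (sh z (insert m S))))
       + (\<Sum>S\<in>Pow {..<m}. (uminus ^^ card ({..<Suc m} - S)) (F (sh z S)))"
  proof -
    have a: "(sh z S)(m := sh z S m + 1) = sh z (insert m S)" if "S \<in> Pow {..<m}" for S
      using that by (auto simp: sh_def fun_eq_iff)
    have b: "card ({..<Suc m} - S) = Suc (card ({..<m} - S))" if "S \<in> Pow {..<m}" for S
    proof -
      have "{..<Suc m} - S = insert m ({..<m} - S)" using that by auto
      then show ?thesis by simp
    qed
    show ?thesis
      unfolding sum.distrib[symmetric]
      by (rule sum.cong) (simp_all add: dplus_def a b neg_pow_diff)
  qed
  also have "\<dots> = (\<Sum>S\<in>Pow {..<Suc m}. (uminus ^^ card ({..<Suc m} - S)) (F (sh z S)))"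
  proof -
    have e: "Pow {..<Suc m} = Pow {..<m} \<union> insert m ` Pow {..<m}"
      by (simp add: lessThan_Suc Pow_insert)
    have d: "Pow {..<m} \<inter> insert m ` Pow {..<m} = {}" by auto
    have i: "inj_on (insert m) (Pow {..<m})" by (auto simp: inj_on_def)
    have c: "card ({..<Suc m} - insert m S) = card ({..<m} - S)" if "S \<in> Pow {..<m}" for S
    proof -
      have "{..<Suc m} - insert m S = {..<m} - S" using that by auto
      then show ?thesis by simp
    qed
    have "(\<Sum>S\<in>Pow {..<Suc m}. (uminus ^^ card ({..<Suc m} - S)) (F (sh z S)))
       = (\<Sum>S\<in>Pow {..<m}. (uminus ^^ card ({..<Suc m} - S)) (F (sh z S)))
       + (\<Sum>S\<in>insert m ` Pow {..<m}. (uminus ^^ card ({..<Suc m} - S)) (F (sh z S)))"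
      unfolding e by (rule sum.union_disjoint) (use d in auto)
    also have "(\<Sum>S\<in>insert m ` Pow {..<m}. (uminus ^^ card ({..<Suc m} - S)) (F (sh z S)))
       = (\<Sum>S\<in>Pow {..<m}. (uminus ^^ card ({..<m} - S)) (F (sh z (insert m S))))"
      by (simp add: sum.reindex[OF i] c)
    finally show ?thesis by simp
  qed
  finally show ?case .
qed

lemma neg_pow_single: "(uminus ^^ n) (Poly_Mapping.single k (1::int)) = Poly_Mapping.single k ((-1)^n)"
  by (induction n) (auto simp: single_uminus)


lemma frac_mono: "j1 < j2 \<Longrightarrow> real j1 / real (j1+1) < real j2 / real (j2+1)"
  by (simp add: field_simps)

lemma frac_lt1: "real j / real (j+1) < 1" by simp

lemma tc_exists:
  assumes "(\<epsilon>::real) > 0"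
  shows "\<exists>C. twist_config io yb zr {x-\<epsilon><..<x+\<epsilon>} {y-\<epsilon><..<y+\<epsilon>} k C"
proof -
  define f where "f = (\<lambda>j::nat. real j / real (j+1))"
  have fm: "strict_mono f" unfolding f_def by (rule strict_monoI) (rule frac_mono)
  have f01: "0 \<le> f j \<and> f j < 1" for j unfolding f_def by simp
  have sa: "strict_mono_on P (\<lambda>j. z + \<epsilon> * f j)" for P z
    using fm assms by (auto simp: strict_mono_on_def strict_mono_def)
  have ia: "(\<lambda>j. z + \<epsilon> * f j) ` P \<subseteq> {z-\<epsilon><..<z+\<epsilon>}" for P z
  proof
    fix t assume "t \<in> (\<lambda>j. z + \<epsilon> * f j) ` P"
    then obtain j where t: "t = z + \<epsilon> * f j" by auto
    have "\<epsilon> * f j < \<epsilon>" using f01[of j] assms by simp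
    moreover have "0 \<le> \<epsilon> * f j" using f01[of j] assms by simp
    ultimately show "t \<in> {z-\<epsilon><..<z+\<epsilon>}" using t assms by auto
  qed
  show ?thesis unfolding twist_config_def Let_def
    apply (rule exI)
    apply (rule exI[of _ "\<lambda>j. x + \<epsilon> * f j"])
    apply (rule exI[of _ "\<lambda>j. y + \<epsilon> * f j"])
    using sa ia by simp
qed

lemma tc_one: "x \<in> A \<Longrightarrow> y \<in> A' \<Longrightarrow> twist_config True False zr A A' 1 {(x, y, Arrow zr True)}"
  unfolding twist_config_def Let_def
  apply (rule exI[of _ "\<lambda>_. x"], rule exI[of _ "\<lambda>_. y"])
  apply (simp add: strict_mono_on_def lessThan_Suc)
  apply auto
  done

lemma tc_zero: "x \<in> A \<Longrightarrow> y \<in> A' \<Longrightarrow> twist_config True False zr A A' 0 {(x, y, Arrow (\<not> zr) False)}"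
  unfolding twist_config_def Let_def
  apply (rule exI[of _ "\<lambda>_. x"], rule exI[of _ "\<lambda>_. y"])
  apply (simp add: strict_mono_on_def lessThan_Suc)
  apply auto
  done

lemma oi: "(\<epsilon>::real) > 0 \<Longrightarrow> open_interval {x-\<epsilon><..<x+\<epsilon>}"
  unfolding open_interval_def is_interval_1 by auto


fun cdir :: "kind \<Rightarrow> bool" where
  "cdir (Chord d) = d" | "cdir (Arrow _ _) = False"

lemma sep_lemma:
  fixes p q \<epsilon> :: real
  assumes "2 * \<epsilon> \<le> \<bar>p - q\<bar>"
  shows "{p-\<epsilon><..<p+\<epsilon>} \<inter> {q-\<epsilon><..<q+\<epsilon>} = {}" and "q \<notin> {p-\<epsilon><..<p+\<epsilon>}" and "\<epsilon> \<ge> 0 \<Longrightarrow> q \<notin> {p-\<epsilon><..<p+\<epsilon>}"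
  using assms by (auto simp: abs_if split: if_splits)

theorem lemma5:
  fixes K :: diagram
  assumes "wf_diagram K" and "0 < card (chords K)"
  shows "\<exists>(\<Phi> :: (nat \<Rightarrow> int) \<Rightarrow> diagram set) (\<alpha> :: nat \<Rightarrow> nat) (\<nu> :: nat \<Rightarrow> bool).
           twist_lattice (card (chords K)) \<Phi> \<and>
           dmulti (card (chords K)) \<nu> \<alpha> (\<lambda>z. Poly_Mapping.single (\<Phi> z) (1::int)) (\<lambda>_. 0)
             = resolve K"
proof -
  define m where "m = card (chords K)"
  have finK: "finite K" using assms(1) by (simp add: wf_diagram_def)
  have finC: "finite (chords K)" using finK by (simp add: chords_def)
  obtain c where bij: "bij_betw c {..<m} (chords K)"
    using ex_bij_betw_nat_finite[OF finC] unfolding m_def atLeast0LessThan by blast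
  have cK: "c i \<in> K" "is_chord (snd (snd (c i)))" if "i < m" for i
    using bij that by (auto simp: bij_betw_def chords_def)
  have injc: "inj_on c {..<m}" using bij by (simp add: bij_betw_def)
  define x where "x i = fst (c i)" for i
  define y where "y i = fst (snd (c i))" for i
  define d where "d i = cdir (snd (snd (c i)))" for i
  have cform: "c i = (x i, y i, Chord (d i))" if "i < m" for i
    using cK(2)[OF that] unfolding x_def y_def d_def
    by (cases "c i"; cases "snd (snd (c i))") auto
  define E where "E = ends K"
  have finE: "finite E" unfolding E_def ends_def using finK by auto
  define D where "D = (\<lambda>(p,q). \<bar>p - q\<bar>) ` {pq \<in> E \<times> E. fst pq \<noteq> snd pq}"
  have finD: "finite D" unfolding D_def using finE by auto
  define \<delta> where "\<delta> = Min (insert 1 D)"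
  have \<delta>pos: "\<delta> > 0" unfolding \<delta>_def using finD by (auto simp: D_def)
  have \<delta>le: "\<delta> \<le> \<bar>p - q\<bar>" if "p \<in> E" "q \<in> E" "p \<noteq> q" for p q
  proof -
    have "\<bar>p - q\<bar> \<in> D" unfolding D_def using that by force
    then show ?thesis unfolding \<delta>_def using finD by simp
  qed
  define \<epsilon> where "\<epsilon> = \<delta> / 2"
  have \<epsilon>pos: "\<epsilon> > 0" using \<delta>pos by (simp add: \<epsilon>_def)
  have sep: "2 * \<epsilon> \<le> \<bar>p - q\<bar>" if "p \<in> E" "q \<in> E" "p \<noteq> q" for p q
    using \<delta>le[OF that] by (simp add: \<epsilon>_def)
  have endsI: "fst e \<in> E" "fst (snd e) \<in> E" if "e \<in> K" for e
    using that unfolding E_def ends_def by auto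
  have xE: "x i \<in> E" and yE: "y i \<in> E" if "i < m" for i
    using endsI cK(1)[OF that] unfolding x_def y_def by auto
  have wfK: "\<forall>c\<in>K. fst c < fst (snd c)"
    "\<forall>c\<in>K. \<forall>c'\<in>K. c \<noteq> c' \<longrightarrow> {fst c, fst (snd c)} \<inter> {fst c', fst (snd c')} = {}"
    using assms(1) by (auto simp: wf_diagram_def)
  have xy: "x i < y i" if "i < m" for i
    using wfK(1) cK(1)[OF that] unfolding x_def y_def by auto
  define A where "A i = {x i - \<epsilon><..<x i + \<epsilon>}" for i
  define A' where "A' i = {y i - \<epsilon><..<y i + \<epsilon>}" for i
  define G where "G = K - chords K"
  define conf where "conf i k = (if k = 1 then {res_pos (c i)} else if k = 0 then {res_neg (c i)}
      else (SOME C. twist_config True False (d i) (A i) (A' i) k C))" for i k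
  define \<Phi> where "\<Phi> z = knot_class (G \<union> (\<Union>i<m. conf i (z i)))" for z
  have tl: "twist_lattice m \<Phi>"
    unfolding twist_lattice_def
  proof (intro exI conjI allI impI)
    show "wf_diagram G" using assms(1) unfolding wf_diagram_def G_def by auto
    show "classical G" unfolding classical_def chords_def G_def by auto
    fix i assume i: "i < m"
    show "open_interval (A i)" "open_interval (A' i)" unfolding A_def A'_def using oi \<epsilon>pos by auto
    show "\<forall>u\<in>A i. \<forall>v\<in>A' i. u < v"
      using sep[OF xE[OF i] yE[OF i]] xy[OF i] unfolding A_def A'_def by auto
    show "ends G \<inter> (A i \<union> A' i) = {}"
    proof -
      have "q \<notin> A i \<and> q \<notin> A' i" if q: "q \<in> ends G" for q
      proof -
        obtain e where e: "e \<in> G" "q = fst e \<or> q = fst (snd e)" using q unfolding ends_def by auto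
        have eK: "e \<in> K" and ne: "e \<noteq> c i" using e(1) cK[OF i] by (auto simp: G_def chords_def)
        have qE: "q \<in> E" using e endsI[OF eK] by auto
        have "q \<noteq> x i" "q \<noteq> y i"
          using wfK(2) eK cK(1)[OF i] ne e(2) unfolding x_def y_def by blast+
        then show ?thesis using sep[OF xE[OF i] qE] sep[OF yE[OF i] qE]
          unfolding A_def A'_def by (auto simp: abs_if split: if_splits)
      qed
      then show ?thesis by auto
    qed
    fix k
    show "twist_config True False (d i) (A i) (A' i) k (conf i k)"
    proof -
      have xA: "x i \<in> A i" and yA: "y i \<in> A' i" using \<epsilon>pos unfolding A_def A'_def by auto
      show ?thesis
      proof (cases "k = 1")
        case True then show ?thesis using tc_one[OF xA yA] by (simp add: conf_def cform[OF i])
      next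
        case F1: False
        show ?thesis
        proof (cases "k = 0")
          case True then show ?thesis using tc_zero[OF xA yA] by (simp add: conf_def cform[OF i])
        next
          case False
          have "\<exists>C. twist_config True False (d i) (A i) (A' i) k C"
            unfolding A_def A'_def by (rule tc_exists[OF \<epsilon>pos])
          then show ?thesis using F1 False unfolding conf_def by (simp add: someI_ex)
        qed
      qed
    qed
  next
    fix i j assume i: "i < m" and j: "j < m" and ij: "i \<noteq> j"
    have ne: "c i \<noteq> c j" using injc i j ij by (auto simp: inj_on_def)
    have dist: "x i \<noteq> x j" "x i \<noteq> y j" "y i \<noteq> x j" "y i \<noteq> y j"
      using wfK(2) cK(1)[OF i] cK(1)[OF j] ne unfolding x_def y_def by blast+
    show "(A i \<union> A' i) \<inter> (A j \<union> A' j) = {}"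
      unfolding A_def A'_def
      using sep_lemma(1)[OF sep[OF xE[OF i] xE[OF j] dist(1)]]
        sep_lemma(1)[OF sep[OF xE[OF i] yE[OF j] dist(2)]]
        sep_lemma(1)[OF sep[OF yE[OF i] xE[OF j] dist(3)]]
        sep_lemma(1)[OF sep[OF yE[OF i] yE[OF j] dist(4)]]
      by blast
  next
    fix z show "\<Phi> z = knot_class (G \<union> (\<Union>i<m. conf i (z i)))" by (simp add: \<Phi>_def)
  qed
  have eq: "dmulti m (\<lambda>_. True) (\<lambda>_. 1) (\<lambda>z. Poly_Mapping.single (\<Phi> z) (1::int)) (\<lambda>_. 0) = resolve K"
  proof -
    have "dmulti m (\<lambda>_. True) (\<lambda>_. 1) (\<lambda>z. Poly_Mapping.single (\<Phi> z) (1::int)) (\<lambda>_. 0)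
       = (\<Sum>S\<in>Pow {..<m}. Poly_Mapping.single (\<Phi> (sh (\<lambda>_. 0) S)) ((-1) ^ card ({..<m} - S)))"
      unfolding dmulti_ones neg_pow_single ..
    also have "\<dots> = (\<Sum>S\<in>Pow {..<m}. (\<lambda>T. Poly_Mapping.single
        (knot_class ((K - chords K) \<union> res_pos ` T \<union> res_neg ` (chords K - T)))
        ((-1) ^ card (chords K - T))) (c ` S))"
    proof (rule sum.cong[OF refl])
      fix S assume S: "S \<in> Pow {..<m}"
      have diff: "chords K - c ` S = c ` ({..<m} - S)"
        using bij S inj_on_image_set_diff[of c "{..<m}" "{..<m}" S] by (auto simp: bij_betw_def)
      have card: "card (chords K - c ` S) = card ({..<m} - S)"
        unfolding diff using injc by (simp add: card_image inj_on_subset[of c "{..<m}"])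
      have U: "(\<Union>i<m. conf i (sh (\<lambda>_. 0) S i)) = res_pos ` c ` S \<union> res_neg ` c ` ({..<m} - S)"
        using S by (auto simp: sh_def conf_def)
      show "Poly_Mapping.single (\<Phi> (sh (\<lambda>_. 0) S)) ((-1) ^ card ({..<m} - S)) =
        (\<lambda>T. Poly_Mapping.single
        (knot_class ((K - chords K) \<union> res_pos ` T \<union> res_neg ` (chords K - T)))
        ((-1) ^ card (chords K - T))) (c ` S)"
        using card unfolding diff by (simp add: \<Phi>_def U G_def Un_assoc)
    qed
    also have "\<dots> = resolve K"
      unfolding resolve_def by (rule sum.reindex_bij_betw[OF bij_betw_Pow[OF bij]])
    finally show ?thesis .
  qed
  show ?thesis unfolding m_def[symmetric] using tl eq by blast
qed

end
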